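(* For every integer $d \ge 1$, every monoid in $\mathcal{C}_d$ is isomorphic to an additive submonoid of $\mathbb{N}^d$ of rank $d$.
   Context: All monoids are commutative, cancellative and reduced (the only invertible element is the identity). $\mathbb{N} = \{0,1,2,\dots\}$. For a monoid $H$, $\mathrm{gp}(H)$ denotes its Grothendieck (difference) group, and the rank of $H$ is the rank of the abelian group $\mathrm{gp}(H)$, i.e. $\dim_{\mathbb{Q}} \mathbb{Q}\otimes_{\mathbb{Z}} \mathrm{gp}(H)$. For $d \ge 1$, $\mathcal{C}_d$ denotes the collection of all rank-$d$ submonoids of free commutative monoids of finite rank. *)

theory Defs
  imports Main
begin

text \<open>The free commutative monoid of rank n, realised as N^n: functions nat => nat
  vanishing outside the indices 0..n-1, with pointwise addition.\<close>
definition free_cmon :: "nat \<Rightarrow> (nat \<Rightarrow> nat) set" where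
  "free_cmon n = {x. \<forall>i\<ge>n. x i = 0}"

definition submonoid_of :: "(nat \<Rightarrow> nat) set \<Rightarrow> (nat \<Rightarrow> nat) set \<Rightarrow> bool" where
  "submonoid_of H M \<longleftrightarrow> H \<subseteq> M \<and> (\<lambda>i. 0) \<in> H \<and>
     (\<forall>a\<in>H. \<forall>b\<in>H. (\<lambda>i. a i + b i) \<in> H)"

text \<open>Grothendieck group of a submonoid H of N^n, realised inside Z^n as the set of differences.\<close>
definition gp :: "(nat \<Rightarrow> nat) set \<Rightarrow> (nat \<Rightarrow> int) set" where
  "gp H = {(\<lambda>i. int (a i) - int (b i)) | a b. a \<in> H \<and> b \<in> H}"

definition z_indep :: "(nat \<Rightarrow> int) set \<Rightarrow> bool" where
  "z_indep S \<longleftrightarrow> finite S \<and>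
     (\<forall>c. (\<forall>i. (\<Sum>v\<in>S. c v * v i) = 0) \<longrightarrow> (\<forall>v\<in>S. c v = 0))"

text \<open>Rank of an abelian group G (of integer vectors): the maximal size of a Z-linearly
  independent subset, i.e. dim_Q (Q tensor G).\<close>
definition has_rank :: "(nat \<Rightarrow> int) set \<Rightarrow> nat \<Rightarrow> bool" where
  "has_rank G d \<longleftrightarrow> (\<exists>S\<subseteq>G. z_indep S \<and> card S = d) \<and>
     (\<forall>S\<subseteq>G. z_indep S \<longrightarrow> card S \<le> d)"

definition monoid_iso :: "(nat \<Rightarrow> nat) set \<Rightarrow> (nat \<Rightarrow> nat) set \<Rightarrow> bool" where
  "monoid_iso H H' \<longleftrightarrow> (\<exists>f. bij_betw f H H' \<and> f (\<lambda>i. 0) = (\<lambda>i. 0) \<and>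
     (\<forall>a\<in>H. \<forall>b\<in>H. f (\<lambda>i. a i + b i) = (\<lambda>i. f a i + f b i)))"

end

theory Submission
  imports Defs
begin

lemma gp_zero: "submonoid_of H M \<Longrightarrow> (\<lambda>i. 0) \<in> gp H"
  unfolding gp_def submonoid_of_def by force

lemma gp_add:
  assumes "submonoid_of H M" "v \<in> gp H" "w \<in> gp H"
  shows "(\<lambda>i. v i + w i) \<in> gp H"
proof -
  obtain a b where ab: "a \<in> H" "b \<in> H" "v = (\<lambda>i. int (a i) - int (b i))"
    using assms(2) unfolding gp_def by blast
  obtain a' b' where ab': "a' \<in> H" "b' \<in> H" "w = (\<lambda>i. int (a' i) - int (b' i))"
    using assms(3) unfolding gp_def by blast
  have "(\<lambda>i. a i + a' i) \<in> H" "(\<lambda>i. b i + b' i) \<in> H"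
    using assms(1) ab ab' unfolding submonoid_of_def by auto
  moreover have "(\<lambda>i. v i + w i) = (\<lambda>i. int ((\<lambda>i. a i + a' i) i) - int ((\<lambda>i. b i + b' i) i))"
    using ab ab' by auto
  ultimately have "\<exists>x y. (\<lambda>i. v i + w i) = (\<lambda>i. int (x i) - int (y i)) \<and> x \<in> H \<and> y \<in> H"
    by (intro exI[of _ "\<lambda>i. a i + a' i"] exI[of _ "\<lambda>i. b i + b' i"]) simp
  then show ?thesis unfolding gp_def by simp
qed

lemma gp_neg:
  assumes "v \<in> gp H" shows "(\<lambda>i. - v i) \<in> gp H"
proof -
  obtain a b where ab: "a \<in> H" "b \<in> H" "v = (\<lambda>i. int (a i) - int (b i))"
    using assms unfolding gp_def by blast
  have "(\<lambda>i. - v i) = (\<lambda>i. int (b i) - int (a i))" using ab by auto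
  then show ?thesis using ab unfolding gp_def by blast
qed

lemma gp_nat_mult:
  assumes "submonoid_of H M" "v \<in> gp H" shows "(\<lambda>i. int m * v i) \<in> gp H"
proof (induction m)
  case 0
  then show ?case using gp_zero[OF assms(1)] by simp
next
  case (Suc m)
  have "(\<lambda>i. int (Suc m) * v i) = (\<lambda>i. int m * v i + v i)" by (auto simp: algebra_simps)
  then show ?case using gp_add[OF assms(1) Suc assms(2)] by simp
qed

lemma gp_int_mult:
  assumes "submonoid_of H M" "v \<in> gp H" shows "(\<lambda>i. (c::int) * v i) \<in> gp H"
proof (cases "c \<ge> 0")
  case True
  then have e: "(\<lambda>i. c * v i) = (\<lambda>i. int (nat c) * v i)" by simp
  show ?thesis unfolding e by (rule gp_nat_mult[OF assms])
next
  case False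
  then have e: "(\<lambda>i. c * v i) = (\<lambda>i. - (int (nat (-c)) * v i))" by simp
  show ?thesis unfolding e by (rule gp_neg[OF gp_nat_mult[OF assms]])
qed

lemma gp_sum:
  assumes "submonoid_of H M" "finite S" "S \<subseteq> gp H"
  shows "(\<lambda>i. \<Sum>v\<in>S. c v * v i) \<in> gp H"
  using assms(2,3)
proof (induction S rule: finite_induct)
  case empty
  then show ?case using gp_zero[OF assms(1)] by simp
next
  case (insert x F)
  have "(\<lambda>i. \<Sum>v\<in>insert x F. c v * v i) = (\<lambda>i. c x * x i + (\<Sum>v\<in>F. c v * v i))"
    using insert by auto
  then show ?case using gp_add[OF assms(1) gp_int_mult[OF assms(1)] insert.IH] insert.prems by simp
qed

lemma gp_vanish:
  assumes "submonoid_of H (free_cmon n)" "v \<in> gp H" "i \<ge> n" shows "v i = 0"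
proof -
  obtain a b where ab: "a \<in> H" "b \<in> H" "v = (\<lambda>i. int (a i) - int (b i))"
    using assms(2) unfolding gp_def by blast
  have "a i = 0" "b i = 0" using ab(1,2) assms(1,3) unfolding submonoid_of_def free_cmon_def by auto
  then show ?thesis using ab(3) by simp
qed

lemma z_indep_image:
  assumes inj: "inj_on F S" and fin: "finite S"
    and A: "\<And>c. (\<forall>j. (\<Sum>v\<in>S. c v * F v j) = 0) \<Longrightarrow> (\<forall>i. (\<Sum>v\<in>S. c v * v i) = 0)"
    and B: "\<And>c. (\<forall>i. (\<Sum>v\<in>S. c v * v i) = 0) \<Longrightarrow> (\<forall>j. (\<Sum>v\<in>S. c v * F v j) = 0)"
  shows "z_indep (F ` S) \<longleftrightarrow> z_indep S"
proof -
  have re: "(\<Sum>u\<in>F ` S. c u * u j) = (\<Sum>v\<in>S. c (F v) * F v j)" for c :: "(nat \<Rightarrow> int) \<Rightarrow> int" and j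
    using sum.reindex[OF inj] by simp
  show ?thesis
  proof
    assume zi: "z_indep (F ` S)"
    show "z_indep S" unfolding z_indep_def
    proof (intro conjI fin allI impI ballI)
      fix c v assume h: "\<forall>i. (\<Sum>v\<in>S. c v * v i) = 0" and v: "v \<in> S"
      define c' where "c' = (\<lambda>u. c (inv_into S F u))"
      have cF: "c' (F w) = c w" if "w \<in> S" for w using inv_into_f_f[OF inj that] c'_def by simp
      have "\<forall>j. (\<Sum>u\<in>F ` S. c' u * u j) = 0"
      proof
        fix j
        have "(\<Sum>u\<in>F ` S. c' u * u j) = (\<Sum>w\<in>S. c w * F w j)"
          unfolding re by (rule sum.cong) (auto simp: cF)
        also have "\<dots> = 0" using B[OF h] by blast
        finally show "(\<Sum>u\<in>F ` S. c' u * u j) = 0" .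
      qed
      then have "c' (F v) = 0" using zi v unfolding z_indep_def by blast
      then show "c v = 0" using cF v by simp
    qed
  next
    assume zi: "z_indep S"
    show "z_indep (F ` S)" unfolding z_indep_def
    proof (intro conjI allI impI ballI)
      show "finite (F ` S)" using fin by simp
      fix c u assume h: "\<forall>j. (\<Sum>u\<in>F ` S. c u * u j) = 0" and u: "u \<in> F ` S"
      have "\<forall>j. (\<Sum>v\<in>S. (c \<circ> F) v * F v j) = 0" using h re by simp
      then have "\<forall>i. (\<Sum>v\<in>S. (c \<circ> F) v * v i) = 0" by (rule A)
      then have "\<forall>v\<in>S. (c \<circ> F) v = 0" using zi unfolding z_indep_def by blast
      then show "c u = 0" using u by auto
    qed
  qed
qed

theorem lemma4p1:
  fixes d n :: nat and H :: "(nat \<Rightarrow> nat) set"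
  assumes "d \<ge> 1"
    and "submonoid_of H (free_cmon n)"
    and "has_rank (gp H) d"
  shows "\<exists>H'. submonoid_of H' (free_cmon d) \<and> has_rank (gp H') d \<and> monoid_iso H H'"
proof -
  note sm = assms(2)
  obtain S0 where S0: "S0 \<subseteq> gp H" "z_indep S0" "card S0 = d"
    using assms(3) unfolding has_rank_def by blast
  have rk: "\<And>S. S \<subseteq> gp H \<Longrightarrow> z_indep S \<Longrightarrow> card S \<le> d"
    using assms(3) unfolding has_rank_def by blast
  define P where "P I \<longleftrightarrow> I \<subseteq> {0..<n} \<and> (\<forall>v\<in>gp H. (\<forall>i\<in>I. v i = 0) \<longrightarrow> v = (\<lambda>i. 0))" for I
  have "P {0..<n}" unfolding P_def
  proof (intro conjI ballI impI subset_refl)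
    fix v assume v: "v \<in> gp H" "\<forall>i\<in>{0..<n}. v i = 0"
    show "v = (\<lambda>i. 0)"
    proof
      fix i show "v i = 0"
        using v gp_vanish[OF sm v(1), of i] by (cases "i < n") auto
    qed
  qed
  then obtain I where PI: "P I" and Imin: "\<And>J. P J \<Longrightarrow> card I \<le> card J"
    using ex_has_least_nat[of P "{0..<n}" card] by blast
  have finI: "finite I" using PI unfolding P_def using finite_subset by blast
  have Ik: "\<And>v. v \<in> gp H \<Longrightarrow> (\<forall>i\<in>I. v i = 0) \<Longrightarrow> v = (\<lambda>i. 0)" using PI unfolding P_def by blast
  have ex: "\<exists>v. v \<in> gp H \<and> (\<forall>j\<in>I-{i}. v j = 0) \<and> v i \<noteq> 0" if i: "i \<in> I" for i
  proof -
    have "card (I - {i}) < card I" using finI i by (meson card_Diff1_less)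
    have "\<not> P (I - {i})"
    proof
      assume "P (I - {i})"
      then have "card I \<le> card (I - {i})" by (rule Imin)
      then show False using \<open>card (I - {i}) < card I\<close> by simp
    qed
    moreover have "I - {i} \<subseteq> {0..<n}" using PI unfolding P_def by blast
    ultimately obtain v where v: "v \<in> gp H" "\<forall>j\<in>I-{i}. v j = 0" "v \<noteq> (\<lambda>i. 0)"
      unfolding P_def by blast
    have "v i \<noteq> 0"
    proof
      assume "v i = 0"
      then have "\<forall>j\<in>I. v j = 0" using v(2) by blast
      then show False using Ik v by blast
    qed
    then show ?thesis using v by blast
  qed
  then have "\<forall>i\<in>I. \<exists>v. v \<in> gp H \<and> (\<forall>j\<in>I-{i}. v j = 0) \<and> v i \<noteq> 0" by blast
  from bchoice[OF this] obtain w where w0: "\<forall>i\<in>I. w i \<in> gp H \<and> (\<forall>j\<in>I-{i}. w i j = 0) \<and> w i i \<noteq> 0"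
    by blast
  have w: "\<And>i. i \<in> I \<Longrightarrow> w i \<in> gp H \<and> (\<forall>j\<in>I-{i}. w i j = 0) \<and> w i i \<noteq> 0"
    using w0 by blast
  have injw: "inj_on w I"
  proof (rule inj_onI)
    fix i i' assume h: "i \<in> I" "i' \<in> I" "w i = w i'"
    show "i = i'"
    proof (rule ccontr)
      assume "i \<noteq> i'"
      then have "w i i' = 0" using w[OF h(1)] h(2) by blast
      then show False using w[OF h(2)] h(3) by simp
    qed
  qed
  have ziw: "z_indep (w ` I)" unfolding z_indep_def
  proof (intro conjI allI impI ballI)
    show "finite (w ` I)" using finI by simp
    fix c u assume h: "\<forall>j. (\<Sum>u\<in>w ` I. c u * u j) = 0" and u: "u \<in> w ` I"
    then obtain i where i: "i \<in> I" "u = w i" by blast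
    have "(\<Sum>u\<in>w ` I. c u * u i) = (\<Sum>i'\<in>I. c (w i') * w i' i)"
      using sum.reindex[OF injw] by simp
    also have "\<dots> = c (w i) * w i i + (\<Sum>i'\<in>I-{i}. c (w i') * w i' i)"
      using sum.remove[OF finI i(1)] by simp
    also have "(\<Sum>i'\<in>I-{i}. c (w i') * w i' i) = 0"
      using w i(1) by (intro sum.neutral) auto
    finally have "c (w i) * w i i = 0" using h by simp
    then show "c u = 0" using w[OF i(1)] i by simp
  qed
  have "w ` I \<subseteq> gp H" using w by blast
  then have "card (w ` I) \<le> d" using rk ziw by blast
  then have kd: "card I \<le> d" using card_image[OF injw] by simp
  define k where "k = card I"
  obtain \<sigma> where \<sigma>: "bij_betw \<sigma> {0..<k} I" using ex_bij_betw_nat_finite[OF finI] k_def by blast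
  have surj\<sigma>: "\<And>i. i \<in> I \<Longrightarrow> \<exists>j<k. \<sigma> j = i" using \<sigma> unfolding bij_betw_def by auto
  define f :: "(nat \<Rightarrow> nat) \<Rightarrow> (nat \<Rightarrow> nat)" where "f a = (\<lambda>j. if j < k then a (\<sigma> j) else 0)" for a
  define F :: "(nat \<Rightarrow> int) \<Rightarrow> (nat \<Rightarrow> int)" where "F v = (\<lambda>j. if j < k then v (\<sigma> j) else 0)" for v
  have ker: "v = (\<lambda>i. 0)" if "v \<in> gp H" "\<And>j. j < k \<Longrightarrow> v (\<sigma> j) = 0" for v
  proof -
    have "\<forall>i\<in>I. v i = 0"
    proof
      fix i assume "i \<in> I"
      then obtain j where "j < k" "\<sigma> j = i" using surj\<sigma> by blast
      then show "v i = 0" using that(2) by blast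
    qed
    then show ?thesis using Ik[OF that(1)] by blast
  qed
  have injF: "inj_on F (gp H)"
  proof (rule inj_onI)
    fix v v' assume h: "v \<in> gp H" "v' \<in> gp H" "F v = F v'"
    have "(\<lambda>i. v i + - v' i) \<in> gp H" using gp_add[OF sm h(1) gp_neg[OF h(2)]] .
    moreover have "(\<lambda>i. v i + - v' i) (\<sigma> j) = 0" if "j < k" for j
      using fun_cong[OF h(3), of j] that unfolding F_def by simp
    ultimately have z: "(\<lambda>i. v i + - v' i) = (\<lambda>i. 0)" using ker by blast
    have "v i = v' i" for i using fun_cong[OF z, of i] by simp
    then show "v = v'" by (simp add: fun_eq_iff)
  qed
  have injf: "inj_on f H"
  proof (rule inj_onI)
    fix a b assume h: "a \<in> H" "b \<in> H" "f a = f b"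
    have "(\<lambda>i. int (a i) - int (b i)) \<in> gp H" using h unfolding gp_def by blast
    moreover have "(\<lambda>i. int (a i) - int (b i)) (\<sigma> j) = 0" if "j < k" for j
      using fun_cong[OF h(3), of j] that unfolding f_def by simp
    ultimately have z: "(\<lambda>i. int (a i) - int (b i)) = (\<lambda>i. 0)" using ker by blast
    have "\<And>i. int (a i) - int (b i) = 0" using fun_cong[OF z] by simp
    then show "a = b" by (simp add: fun_eq_iff)
  qed
  have gpH': "gp (f ` H) = F ` gp H"
  proof
    show "gp (f ` H) \<subseteq> F ` gp H"
    proof
      fix u assume "u \<in> gp (f ` H)"
      then obtain a b where ab: "a \<in> H" "b \<in> H" "u = (\<lambda>i. int (f a i) - int (f b i))"
        unfolding gp_def by blast
      have "u = F (\<lambda>i. int (a i) - int (b i))" using ab(3) unfolding F_def f_def by auto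
      moreover have "(\<lambda>i. int (a i) - int (b i)) \<in> gp H" using ab unfolding gp_def by blast
      ultimately show "u \<in> F ` gp H" by blast
    qed
  next
    show "F ` gp H \<subseteq> gp (f ` H)"
    proof
      fix u assume "u \<in> F ` gp H"
      then obtain a b where ab: "a \<in> H" "b \<in> H" "u = F (\<lambda>i. int (a i) - int (b i))"
        unfolding gp_def by blast
      have "u = (\<lambda>i. int (f a i) - int (f b i))" using ab(3) unfolding F_def f_def by auto
      then have "\<exists>x y. u = (\<lambda>i. int (x i) - int (y i)) \<and> x \<in> f ` H \<and> y \<in> f ` H"
        using ab by blast
      then show "u \<in> gp (f ` H)" unfolding gp_def by simp
    qed
  qed
  have Fj: "F v j = (if j < k then v (\<sigma> j) else 0)" for v j unfolding F_def by simp
  have transfer: "z_indep (F ` S) \<longleftrightarrow> z_indep S" if S: "S \<subseteq> gp H" "finite S" for S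
  proof (rule z_indep_image)
    show "inj_on F S" using injF S inj_on_subset by blast
    show "finite S" by fact
  next
    fix c assume h: "\<forall>j. (\<Sum>v\<in>S. c v * F v j) = 0"
    have mem: "(\<lambda>i. \<Sum>v\<in>S. c v * v i) \<in> gp H" using gp_sum[OF sm S(2,1)] .
    have "(\<lambda>i. \<Sum>v\<in>S. c v * v i) (\<sigma> j) = 0" if "j < k" for j
      using h[rule_format, of j] that by (simp add: Fj)
    then have z: "(\<lambda>i. \<Sum>v\<in>S. c v * v i) = (\<lambda>i. 0)" using ker[OF mem] by blast
    show "\<forall>i. (\<Sum>v\<in>S. c v * v i) = 0" using fun_cong[OF z] by simp
  next
    fix c assume h: "\<forall>i. (\<Sum>v\<in>S. c v * v i) = 0"
    show "\<forall>j. (\<Sum>v\<in>S. c v * F v j) = 0"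
    proof
      fix j show "(\<Sum>v\<in>S. c v * F v j) = 0"
        using h by (cases "j < k") (simp_all add: Fj)
    qed
  qed
  have finS0: "finite S0" using S0(2) unfolding z_indep_def by blast
  have sub: "submonoid_of (f ` H) (free_cmon d)"
    unfolding submonoid_of_def free_cmon_def
  proof (intro conjI ballI)
    show "f ` H \<subseteq> {x. \<forall>i\<ge>d. x i = 0}" using kd unfolding f_def k_def by auto
    have "f (\<lambda>i. 0) = (\<lambda>i. 0)" unfolding f_def by auto
    moreover have "(\<lambda>i. 0) \<in> H" using sm unfolding submonoid_of_def by blast
    ultimately show "(\<lambda>i. 0) \<in> f ` H" by (metis image_eqI)
  next
    fix x y assume "x \<in> f ` H" "y \<in> f ` H"
    then obtain a b where ab: "a \<in> H" "b \<in> H" "x = f a" "y = f b" by blast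
    have "(\<lambda>i. a i + b i) \<in> H" using sm ab unfolding submonoid_of_def by blast
    moreover have "(\<lambda>i. x i + y i) = f (\<lambda>i. a i + b i)" using ab unfolding f_def by (simp add: fun_eq_iff)
    ultimately show "(\<lambda>i. x i + y i) \<in> f ` H" by (metis image_eqI)
  qed
  have rank: "has_rank (gp (f ` H)) d" unfolding has_rank_def gpH'
  proof (intro conjI allI impI)
    have "F ` S0 \<subseteq> F ` gp H" using S0 by blast
    moreover have "z_indep (F ` S0)" using transfer[OF S0(1) finS0] S0(2) by simp
    moreover have "card (F ` S0) = d" using card_image[OF inj_on_subset[OF injF S0(1)]] S0(3) by simp
    ultimately show "\<exists>S\<subseteq>F ` gp H. z_indep S \<and> card S = d" by blast
  next
    fix T assume T1: "T \<subseteq> F ` gp H" and T2: "z_indep T"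
    have T: "T \<subseteq> F ` gp H \<and> z_indep T" using T1 T2 by blast
    then obtain U where U: "U \<subseteq> gp H" "inj_on F U" "T = F ` U" using subset_image_inj[of T F "gp H"] by blast
    have "finite T" using T unfolding z_indep_def by blast
    then have finU: "finite U" using U(3) finite_image_iff[OF U(2)] by simp
    have "z_indep U" using transfer[OF U(1) finU] T U(3) by simp
    then have "card U \<le> d" using rk U(1) by blast
    then show "card T \<le> d" using U(3) card_image[OF U(2)] by simp
  qed
  have iso: "monoid_iso H (f ` H)" unfolding monoid_iso_def
  proof (rule exI[of _ f], intro conjI ballI)
    show "bij_betw f H (f ` H)" using injf by (simp add: bij_betw_def)
    show "f (\<lambda>i. 0) = (\<lambda>i. 0)" unfolding f_def by auto
    fix a b show "f (\<lambda>i. a i + b i) = (\<lambda>i. f a i + f b i)" unfolding f_def by auto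
  qed
  show ?thesis using sub rank iso by blast
qed

end
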